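(* Let $\Omega$, $d$ and the finite set $\mathbb{Y}\subset\Omega$ be as in the context. Given $x'_1,x'_2\in\Omega$, there exist points $y_1,\dots,y_{N}\in\mathbb{Y}$, $N=N(x'_1,x'_2)\ge1$, such that $\{x'_1,y_1,\dots,y_N,x'_2\}$ forms a zigzag in $\Omega$, i.e. $\overline{x'_1y_1}\subset\Omega$, $\overline{y_Nx'_2}\subset\Omega$, $\overline{y_iy_{i+1}}\subset\Omega$ for all $1\le i\le N-1$, and moreover $d(\overline{x'_1y_1},\partial\Omega)\ge\min\{d(x'_1,\partial\Omega),\frac d{10}\}$, $d(\overline{x'_2y_N},\partial\Omega)\ge\min\{d(x'_2,\partial\Omega),\frac d{10}\}$, and $d(\overline{y_iy_{i+1}},\partial\Omega)>\frac d{10}$ for $1\le i\le N-1$.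
   Context: $\Omega\subset\mathbb{R}^3$ is a connected bounded open set with $C^2$ boundary, $n$ the outward unit normal, $\Omega_\epsilon=\{x\in\Omega:d(x,\partial\Omega)<\epsilon\}$, $\overline{xy}=\{sx+(1-s)y:0\le s\le1\}$. There is $\delta(\Omega)>0$ such that for $0<d<\min\{1,\delta\}$ (fixed) there are $x_1^0,\dots,x_{m_1}^0\in\partial\Omega$ with $\partial\Omega\subset\bigcup_iB(x_i^0,d/8)$, and for each $i$ an orthonormal basis $\{e_i^1,e_i^2,-n(x_i^0)\}$ and a $C^2$ function $\phi_i:\mathbb{R}^2\to\mathbb{R}$ with $\phi_i(0)=0$, $\nabla\phi_i(0)=0$, $|\nabla\phi_i|<\frac1{100}$, such that in $B(x_i^0,3d)$ (open and closed) $\partial\Omega$ is the graph $\{x_i^0+u_1e_i^1+u_2e_i^2-\phi_i(u_1,u_2)n(x_i^0)\}$ and $\Omega$ is $\{u_3>\phi_i(u_1,u_2)\}$ in coordinates $x_i^0+u_1e_i^1+u_2e_i^2-u_3n(x_i^0)$, and $B(x_i^0-\frac d2n(x_i^0),\frac d2)\subset B(x_i^0,d)\cap\Omega$. Set $y_i^0:=x_i^0-\frac{3d}4n(x_i^0)$ for $1\le i\le m_1$, and let $y_{m_1+1}^0,\dots,y_{m_1+m_2}^0\in\Omega\setminus\Omega_{d/8}$ be the centers of a finite subcover, with minimal number of balls, of the cover $\{B(x,\frac d{16})\}_{x\in\Omega\setminus\Omega_{d/8}}$ of $\Omega\setminus\Omega_{d/8}$. Then $\mathbb{Y}:=\{y_i^0:1\le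 i\le m_1+m_2\}$. Such a zigzag is called a "good zigzag" from $x'_1$ to $x'_2$ with $N+1$ segments. *)

theory Defs
  imports "HOL-Analysis.Analysis"
begin

definition C2_with_grad :: "(real^2 \<Rightarrow> real) \<Rightarrow> (real^2 \<Rightarrow> real^2) \<Rightarrow> bool" where
  "C2_with_grad f g \<longleftrightarrow>
     (\<forall>x. (f has_derivative (\<lambda>h. g x \<bullet> h)) (at x)) \<and>
     (\<exists>H :: real^2 \<Rightarrow> ((real^2) \<Rightarrow>\<^sub>L (real^2)).
        (\<forall>x. (g has_derivative blinfun_apply (H x)) (at x)) \<and> continuous_on UNIV H)"

definition orthonormal3 :: "real^3 \<Rightarrow> real^3 \<Rightarrow> real^3 \<Rightarrow> bool" where
  "orthonormal3 a b c \<longleftrightarrow> a \<bullet> a = 1 \<and> b \<bullet> b = 1 \<and> c \<bullet> c = 1 \<and>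
     a \<bullet> b = 0 \<and> a \<bullet> c = 0 \<and> b \<bullet> c = 0"

definition C2_boundary :: "(real^3) set \<Rightarrow> bool" where
  "C2_boundary \<Omega> \<longleftrightarrow> (\<forall>p\<in>frontier \<Omega>. \<exists>r>0. \<exists>a b c f g.
      orthonormal3 a b c \<and> C2_with_grad f g \<and>
      \<Omega> \<inter> ball p r = {p + (u$1) *\<^sub>R a + (u$2) *\<^sub>R b + t *\<^sub>R c | u t. t > f u} \<inter> ball p r)"

definition bdry_layer :: "(real^3) set \<Rightarrow> real \<Rightarrow> (real^3) set" where
  "bdry_layer \<Omega> \<epsilon> = {x\<in>\<Omega>. infdist x (frontier \<Omega>) < \<epsilon>}"

text \<open>The graph of phi over the tangent plane at x0, with inward direction -nu (nu = n(x0)).\<close>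
definition chart_graph :: "real^3 \<Rightarrow> real^3 \<Rightarrow> real^3 \<Rightarrow> real^3 \<Rightarrow> (real^2 \<Rightarrow> real) \<Rightarrow> (real^3) set" where
  "chart_graph x0 a b \<nu> \<phi> = {x0 + (u$1) *\<^sub>R a + (u$2) *\<^sub>R b - (\<phi> u) *\<^sub>R \<nu> | u. True}"

definition chart_above :: "real^3 \<Rightarrow> real^3 \<Rightarrow> real^3 \<Rightarrow> real^3 \<Rightarrow> (real^2 \<Rightarrow> real) \<Rightarrow> (real^3) set" where
  "chart_above x0 a b \<nu> \<phi> = {x0 + (u$1) *\<^sub>R a + (u$2) *\<^sub>R b - t *\<^sub>R \<nu> | u t. t > \<phi> u}"

definition good_charts ::
  "(real^3) set \<Rightarrow> real \<Rightarrow> nat \<Rightarrow> (nat \<Rightarrow> real^3) \<Rightarrow> (nat \<Rightarrow> real^3) \<Rightarrow> (nat \<Rightarrow> real^3)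
     \<Rightarrow> (nat \<Rightarrow> real^3) \<Rightarrow> (nat \<Rightarrow> real^2 \<Rightarrow> real) \<Rightarrow> (nat \<Rightarrow> real^2 \<Rightarrow> real^2) \<Rightarrow> bool" where
  "good_charts \<Omega> d m1 x0 e1 e2 \<nu> \<phi> g \<longleftrightarrow>
     (\<forall>i\<in>{1..m1}. x0 i \<in> frontier \<Omega>) \<and>
     frontier \<Omega> \<subseteq> (\<Union>i\<in>{1..m1}. ball (x0 i) (d/8)) \<and>
     (\<forall>i\<in>{1..m1}.
        orthonormal3 (e1 i) (e2 i) (- \<nu> i) \<and>
        C2_with_grad (\<phi> i) (g i) \<and> \<phi> i 0 = 0 \<and> g i 0 = 0 \<and>
        (\<forall>u. norm (g i u) < 1/100) \<and>
        (\<forall>B\<in>{ball (x0 i) (3*d), cball (x0 i) (3*d)}.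
            frontier \<Omega> \<inter> B = chart_graph (x0 i) (e1 i) (e2 i) (\<nu> i) (\<phi> i) \<inter> B \<and>
            \<Omega> \<inter> B = chart_above (x0 i) (e1 i) (e2 i) (\<nu> i) (\<phi> i) \<inter> B) \<and>
        ball (x0 i - (d/2) *\<^sub>R \<nu> i) (d/2) \<subseteq> ball (x0 i) d \<inter> \<Omega>)"

definition min_subcover_centres :: "(real^3) set \<Rightarrow> real \<Rightarrow> (real^3) set \<Rightarrow> bool" where
  "min_subcover_centres \<Omega> d C \<longleftrightarrow>
     (let K = \<Omega> - bdry_layer \<Omega> (d/8) in
      finite C \<and> C \<subseteq> K \<and> K \<subseteq> (\<Union>y\<in>C. ball y (d/16)) \<and>
      (\<forall>C'. finite C' \<and> C' \<subseteq> K \<and> K \<subseteq> (\<Union>y\<in>C'. ball y (d/16)) \<longrightarrow> card C \<le> card C'))"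

definition Yset :: "real \<Rightarrow> nat \<Rightarrow> (nat \<Rightarrow> real^3) \<Rightarrow> (nat \<Rightarrow> real^3) \<Rightarrow> (real^3) set \<Rightarrow> (real^3) set" where
  "Yset d m1 x0 \<nu> C = (\<lambda>i. x0 i - (3*d/4) *\<^sub>R \<nu> i) ` {1..m1} \<union> C"

end

theory Submission
  imports Defs
begin


lemma orth_span:
  fixes a b c x :: "real^3"
  assumes "orthonormal3 a b c"
  shows "x = (x \<bullet> a) *\<^sub>R a + (x \<bullet> b) *\<^sub>R b + (x \<bullet> c) *\<^sub>R c"
proof (rule ccontr)
  assume nz: "x \<noteq> (x \<bullet> a) *\<^sub>R a + (x \<bullet> b) *\<^sub>R b + (x \<bullet> c) *\<^sub>R c"
  define w where "w = x - ((x \<bullet> a) *\<^sub>R a + (x \<bullet> b) *\<^sub>R b + (x \<bullet> c) *\<^sub>R c)"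
  have o: "a \<bullet> a = 1" "b \<bullet> b = 1" "c \<bullet> c = 1" "a \<bullet> b = 0" "a \<bullet> c = 0" "b \<bullet> c = 0"
    using assms by (auto simp: orthonormal3_def)
  have o2: "b \<bullet> a = 0" "c \<bullet> a = 0" "c \<bullet> b = 0" using o by (auto simp: inner_commute)
  have wa: "w \<bullet> a = 0" "w \<bullet> b = 0" "w \<bullet> c = 0"
    using o o2 by (auto simp: w_def inner_diff_left inner_add_left)
  have w0: "w \<noteq> 0" using nz by (simp add: w_def)
  hence ww: "w \<bullet> w \<noteq> 0" by simp
  have dd: "a \<noteq> b" "a \<noteq> c" "b \<noteq> c" "a \<noteq> w" "b \<noteq> w" "c \<noteq> w"
    using o wa by (metis zero_neq_one)+
  let ?S = "{a, b, c, w}"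
  have po: "pairwise orthogonal ?S"
    using o wa by (auto simp: pairwise_def orthogonal_def inner_commute)
  have z: "0 \<notin> ?S" using o w0 by auto
  have "independent ?S" by (rule pairwise_orthogonal_independent[OF po z])
  hence "card ?S \<le> DIM(real^3)" using independent_bound by blast
  moreover have "card ?S = 4"
    using dd by auto
  ultimately show False by simp
qed



lemma lip:
  assumes "C2_with_grad f g" "\<forall>u. norm (g u) < 1/100"
  shows "\<bar>f u - f w\<bar> \<le> (1/100) * (\<bar>u$1 - w$1\<bar> + \<bar>u$2 - w$2\<bar>)"
proof -
  have d: "\<And>x. (f has_derivative (\<lambda>h. g x \<bullet> h)) (at x within UNIV)"
    using assms(1) by (simp add: C2_with_grad_def)
  have o: "\<And>x. onorm (\<lambda>h. g x \<bullet> h) \<le> 1/100"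
  proof -
    fix x
    show "onorm (\<lambda>h. g x \<bullet> h) \<le> 1/100"
    proof (rule onorm_le)
      fix h
      have "norm (g x \<bullet> h) \<le> norm (g x) * norm h" by (simp add: Cauchy_Schwarz_ineq2)
      also have "\<dots> \<le> 1/100 * norm h" using assms(2)[rule_format, of x] norm_ge_zero[of h] by (metis less_imp_le mult_right_mono)
      finally show "norm (g x \<bullet> h) \<le> 1/100 * norm h" .
    qed
  qed
  have "norm (f u - f w) \<le> 1/100 * norm (u - w)"
    by (rule differentiable_bound[OF convex_UNIV d o]) auto
  also have "norm (u - w) \<le> \<bar>u$1 - w$1\<bar> + \<bar>u$2 - w$2\<bar>"
    using norm_le_l1_cart[of "u - w"] by (simp add: sum_2)
  finally show ?thesis by simp
qed

lemma two_ball: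
  fixes y y' q p :: "'a::real_inner"
  assumes "h \<le> dist q y" "h \<le> dist q y'" "0 \<le> h" "p \<in> closed_segment y y'"
  shows "h\<^sup>2 - (dist y y')\<^sup>2 / 4 \<le> (dist q p)\<^sup>2"
proof -
  obtain s where s: "0 \<le> s" "s \<le> 1" "p = (1 - s) *\<^sub>R y + s *\<^sub>R y'"
    using assms(4) by (auto simp: closed_segment_def)
  define A where "A = q - y"
  define B where "B = q - y'"
  have qp: "q - p = (1 - s) *\<^sub>R A + s *\<^sub>R B"
    by (simp add: A_def B_def s(3) algebra_simps)
  have yy: "y - y' = B - A" by (simp add: A_def B_def)
  have id: "(dist q p)\<^sup>2 = (1 - s) * (norm A)\<^sup>2 + s * (norm B)\<^sup>2 - s * (1 - s) * (dist y y')\<^sup>2"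
    unfolding dist_norm qp yy power2_norm_eq_inner
    by (simp add: inner_add_left inner_add_right inner_diff_left inner_diff_right inner_commute algebra_simps power2_eq_square)
  have hA: "h\<^sup>2 \<le> (norm A)\<^sup>2" using assms(1,3) by (simp add: A_def dist_norm power_mono)
  have hB: "h\<^sup>2 \<le> (norm B)\<^sup>2" using assms(2,3) by (simp add: B_def dist_norm power_mono)
  have "s * (1 - s) \<le> 1/4"
  proof -
    have "(s-1/2)\<^sup>2 = 1/4 - s*(1-s)" by (simp add: power2_eq_square algebra_simps)
    moreover have "0 \<le> (s-1/2)\<^sup>2" by simp
    ultimately show ?thesis by linarith
  qed
  hence "s * (1 - s) * (dist y y')\<^sup>2 \<le> 1/4 * (dist y y')\<^sup>2"
    by (rule mult_right_mono) simp
  moreover have "h\<^sup>2 \<le> (1 - s) * (norm A)\<^sup>2 + s * (norm B)\<^sup>2"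
  proof -
    have "(1 - s) * h\<^sup>2 \<le> (1 - s) * (norm A)\<^sup>2" using hA s by (simp add: mult_left_mono)
    moreover have "s * h\<^sup>2 \<le> s * (norm B)\<^sup>2" using hB s by (simp add: mult_left_mono)
    ultimately show ?thesis by (simp add: algebra_simps)
  qed
  ultimately show ?thesis unfolding id by simp
qed



locale zz =
  fixes \<Omega> :: "(real^3) set" and d :: real and m1 :: nat
    and x0 e1 e2 \<nu> :: "nat \<Rightarrow> real^3" and \<phi> :: "nat \<Rightarrow> real^2 \<Rightarrow> real"
    and g :: "nat \<Rightarrow> real^2 \<Rightarrow> real^2" and C :: "(real^3) set"
  assumes opn: "open \<Omega>" and bdd: "bounded \<Omega>" and cnn: "connected \<Omega>" and ne: "\<Omega> \<noteq> {}"
    and dpos: "0 < d" and gc: "good_charts \<Omega> d m1 x0 e1 e2 \<nu> \<phi> g"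
    and msc: "min_subcover_centres \<Omega> d C"
begin

abbreviation "F \<equiv> frontier \<Omega>"
definition "K = {x\<in>\<Omega>. d/8 \<le> infdist x F}"
definition "yy i = x0 i - (3*d/4) *\<^sub>R \<nu> i"
abbreviation "Y \<equiv> Yset d m1 x0 \<nu> C"

lemma FO: "q \<in> F \<Longrightarrow> q \<notin> \<Omega>"
  using frontier_disjoint_eq opn by blast

lemma Fne: "F \<noteq> {}"
proof
  assume "F = {}"
  hence "\<Omega> = UNIV" using ne frontier_eq_empty by blast
  thus False using bdd not_bounded_UNIV by simp
qed

lemma ball_dist: "ball p r \<subseteq> \<Omega> \<Longrightarrow> q \<in> F \<Longrightarrow> r \<le> dist p q"
proof (rule ccontr)
  assume "ball p r \<subseteq> \<Omega>" "q \<in> F" "\<not> r \<le> dist p q"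
  hence "q \<in> \<Omega>" by auto
  thus False using FO \<open>q \<in> F\<close> by blast
qed

lemma dist_ball:
  assumes "p \<in> \<Omega>" "\<And>q. q \<in> F \<Longrightarrow> r \<le> dist p q"
  shows "ball p r \<subseteq> \<Omega>"
proof
  fix x assume x: "x \<in> ball p r"
  show "x \<in> \<Omega>"
  proof (rule ccontr)
    assume "x \<notin> \<Omega>"
    hence "ball p r - \<Omega> \<noteq> {}" using x by blast
    moreover have "0 < r" using x by (metis dist_not_less_zero mem_ball not_le order_less_le_trans)
    hence "ball p r \<inter> \<Omega> \<noteq> {}" using assms(1) by (metis IntI centre_in_ball empty_iff)
    ultimately have "ball p r \<inter> F \<noteq> {}"
      using connected_Int_frontier[of "ball p r" \<Omega>] by auto
    then obtain q where "q \<in> F" "dist p q < r" by auto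
    thus False using assms(2) by fastforce
  qed
qed

lemma infdist_ge: "(\<And>q. q \<in> F \<Longrightarrow> r \<le> dist p q) \<Longrightarrow> r \<le> infdist p F"
  unfolding infdist_eq_setdist by (rule le_setdistI) (use Fne in auto)

lemma infdist_lt: "infdist p F < r \<Longrightarrow> \<exists>q\<in>F. dist p q < r"
proof (rule ccontr)
  assume "infdist p F < r" "\<not> (\<exists>q\<in>F. dist p q < r)"
  hence "r \<le> infdist p F" by (intro infdist_ge) (auto simp: not_less)
  thus False using \<open>infdist p F < r\<close> by simp
qed

lemma infdist_ball: "p \<in> \<Omega> \<Longrightarrow> ball p (infdist p F) \<subseteq> \<Omega>"
  by (rule dist_ball) (auto intro: infdist_le)

lemma infdist_pos: "p \<in> \<Omega> \<Longrightarrow> 0 < infdist p F"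
proof -
  assume p: "p \<in> \<Omega>"
  then obtain e where e: "e > 0" "ball p e \<subseteq> \<Omega>" using opn open_contains_ball by blast
  have "e \<le> infdist p F" by (rule infdist_ge) (rule ball_dist[OF e(2)])
  thus ?thesis using e by simp
qed

lemma ball_K: "p \<in> \<Omega> \<Longrightarrow> ball p (d/8) \<subseteq> \<Omega> \<Longrightarrow> p \<in> K"
proof -
  assume a: "p \<in> \<Omega>" "ball p (d/8) \<subseteq> \<Omega>"
  have "d/8 \<le> infdist p F" by (rule infdist_ge) (rule ball_dist[OF a(2)])
  thus ?thesis using a(1) unfolding K_def by simp
qed

lemma ball_K': "ball p r \<subseteq> \<Omega> \<Longrightarrow> d/8 \<le> r \<Longrightarrow> p \<in> K"
proof -
  assume a: "ball p r \<subseteq> \<Omega>" "d/8 \<le> r"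
  hence "0 < r" using dpos by simp
  hence "p \<in> \<Omega>" using a(1) by auto
  moreover have "ball p (d/8) \<subseteq> ball p r" by (rule subset_ball) (rule a(2))
  hence "ball p (d/8) \<subseteq> \<Omega>" using a(1) by (rule subset_trans)
  ultimately show ?thesis by (rule ball_K)
qed

lemma K_ball: "p \<in> K \<Longrightarrow> ball p (d/8) \<subseteq> \<Omega>"
proof -
  assume "p \<in> K"
  hence a: "p \<in> \<Omega>" "d/8 \<le> infdist p F" unfolding K_def by simp_all
  have "ball p (d/8) \<subseteq> ball p (infdist p F)" by (rule subset_ball) (rule a(2))
  thus ?thesis using infdist_ball[OF a(1)] by (rule subset_trans)
qed

lemma K_alt: "K = \<Omega> - bdry_layer \<Omega> (d/8)"
  unfolding K_def bdry_layer_def by (auto simp: not_less)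

lemma C_K: "C \<subseteq> K" and K_cov: "K \<subseteq> (\<Union>y\<in>C. ball y (d/16))"
proof -
  have "C \<subseteq> K \<and> K \<subseteq> (\<Union>y\<in>C. ball y (d/16))"
    using msc unfolding min_subcover_centres_def K_alt Let_def by (elim conjE) (intro conjI)
  thus "C \<subseteq> K" "K \<subseteq> (\<Union>y\<in>C. ball y (d/16))" by simp_all
qed

lemma gcs:
  assumes "i \<in> {1..m1}"
  shows "orthonormal3 (e1 i) (e2 i) (- \<nu> i)" "C2_with_grad (\<phi> i) (g i)" "\<phi> i 0 = 0"
    "\<forall>u. norm (g i u) < 1/100"
    "\<Omega> \<inter> ball (x0 i) (3*d) = chart_above (x0 i) (e1 i) (e2 i) (\<nu> i) (\<phi> i) \<inter> ball (x0 i) (3*d)"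
    "ball (x0 i - (d/2) *\<^sub>R \<nu> i) (d/2) \<subseteq> \<Omega>"
proof -
  have H: "orthonormal3 (e1 i) (e2 i) (- \<nu> i) \<and>
        C2_with_grad (\<phi> i) (g i) \<and> \<phi> i 0 = 0 \<and> g i 0 = 0 \<and>
        (\<forall>u. norm (g i u) < 1/100) \<and>
        (\<forall>B\<in>{ball (x0 i) (3*d), cball (x0 i) (3*d)}.
            frontier \<Omega> \<inter> B = chart_graph (x0 i) (e1 i) (e2 i) (\<nu> i) (\<phi> i) \<inter> B \<and>
            \<Omega> \<inter> B = chart_above (x0 i) (e1 i) (e2 i) (\<nu> i) (\<phi> i) \<inter> B) \<and>
        ball (x0 i - (d/2) *\<^sub>R \<nu> i) (d/2) \<subseteq> ball (x0 i) d \<inter> \<Omega>"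
    using gc assms unfolding good_charts_def by blast
  show "orthonormal3 (e1 i) (e2 i) (- \<nu> i)" "C2_with_grad (\<phi> i) (g i)" "\<phi> i 0 = 0"
    "\<forall>u. norm (g i u) < 1/100" using H by blast+
  show "\<Omega> \<inter> ball (x0 i) (3*d) = chart_above (x0 i) (e1 i) (e2 i) (\<nu> i) (\<phi> i) \<inter> ball (x0 i) (3*d)"
    using H by blast
  show "ball (x0 i - (d/2) *\<^sub>R \<nu> i) (d/2) \<subseteq> \<Omega>" using H by blast
qed

lemma F_cov: "F \<subseteq> (\<Union>i\<in>{1..m1}. ball (x0 i) (d/8))"
  using gc unfolding good_charts_def by blast

lemma nu_norm: "i \<in> {1..m1} \<Longrightarrow> norm (\<nu> i) = 1"
proof -
  assume "i \<in> {1..m1}"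
  hence "(- \<nu> i) \<bullet> (- \<nu> i) = 1" using gcs(1) unfolding orthonormal3_def by blast
  thus ?thesis by (simp add: norm_eq_1)
qed

lemma yy_ball: assumes "i \<in> {1..m1}" shows "ball (yy i) (d/4) \<subseteq> \<Omega>"
proof -
  have "ball (yy i) (d/4) \<subseteq> ball (x0 i - (d/2) *\<^sub>R \<nu> i) (d/2)"
  proof
    fix p assume "p \<in> ball (yy i) (d/4)"
    hence "dist (yy i) p < d/4" by simp
    moreover have e: "x0 i - (d/2) *\<^sub>R \<nu> i - yy i = (d/4) *\<^sub>R \<nu> i"
      unfolding yy_def by (simp add: algebra_simps flip: scaleR_diff_left)
    have "dist (x0 i - (d/2) *\<^sub>R \<nu> i) (yy i) = d/4"
      unfolding dist_norm e using nu_norm[OF assms] dpos by simp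
    ultimately show "p \<in> ball (x0 i - (d/2) *\<^sub>R \<nu> i) (d/2)"
      using dist_triangle[of "x0 i - (d/2) *\<^sub>R \<nu> i" p "yy i"] by simp
  qed
  thus ?thesis using gcs(6)[OF assms] by blast
qed

lemma Y_K: "Y \<subseteq> K"
proof
  fix y assume "y \<in> Y"
  then consider "y \<in> C" | i where "i \<in> {1..m1}" "y = yy i"
    unfolding Yset_def yy_def by auto
  thus "y \<in> K"
  proof cases
    case 1 thus ?thesis using C_K by auto
  next
    case 2 thus ?thesis using yy_ball[OF 2(1)] ball_K' dpos by auto
  qed
qed

end


context zz begin

definition "cA i z = (z - x0 i) \<bullet> e1 i"
definition "cB i z = (z - x0 i) \<bullet> e2 i"
definition "cN i z = (z - x0 i) \<bullet> (- \<nu> i)"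
definition "cu i z = (vector [cA i z, cB i z] :: real^2)"

lemma orth:
  assumes "i \<in> {1..m1}"
  shows "e1 i \<bullet> e1 i = 1" "e2 i \<bullet> e2 i = 1" "\<nu> i \<bullet> \<nu> i = 1"
    "e1 i \<bullet> e2 i = 0" "e2 i \<bullet> e1 i = 0" "e1 i \<bullet> \<nu> i = 0" "\<nu> i \<bullet> e1 i = 0"
    "e2 i \<bullet> \<nu> i = 0" "\<nu> i \<bullet> e2 i = 0"
    "norm (e1 i) = 1" "norm (e2 i) = 1" "norm (\<nu> i) = 1"
  using gcs(1)[OF assms] unfolding orthonormal3_def
  by (auto simp: inner_commute norm_eq_1)

lemma coord_bound:
  assumes "i \<in> {1..m1}"
  shows "\<bar>cA i z\<bar> \<le> dist (x0 i) z" "\<bar>cB i z\<bar> \<le> dist (x0 i) z" "\<bar>cN i z\<bar> \<le> dist (x0 i) z"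
proof -
  have "\<And>e. norm e = 1 \<Longrightarrow> \<bar>(z - x0 i) \<bullet> e\<bar> \<le> dist (x0 i) z"
    using Cauchy_Schwarz_ineq2 by (metis dist_commute dist_norm mult.right_neutral)
  thus "\<bar>cA i z\<bar> \<le> dist (x0 i) z" "\<bar>cB i z\<bar> \<le> dist (x0 i) z" "\<bar>cN i z\<bar> \<le> dist (x0 i) z"
    unfolding cA_def cB_def cN_def using orth[OF assms] by auto
qed

lemma MEM:
  assumes i: "i \<in> {1..m1}" and z: "z \<in> ball (x0 i) (3*d)"
  shows "z \<in> \<Omega> \<longleftrightarrow> \<phi> i (cu i z) < cN i z"
proof -
  note o = orth[OF i]
  have "z \<in> \<Omega> \<longleftrightarrow> z \<in> chart_above (x0 i) (e1 i) (e2 i) (\<nu> i) (\<phi> i)"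
    using gcs(5)[OF i] z by blast
  also have "\<dots> \<longleftrightarrow> \<phi> i (cu i z) < cN i z"
  proof
    assume "z \<in> chart_above (x0 i) (e1 i) (e2 i) (\<nu> i) (\<phi> i)"
    then obtain u t where ut: "z = x0 i + (u$1) *\<^sub>R e1 i + (u$2) *\<^sub>R e2 i - t *\<^sub>R \<nu> i" "t > \<phi> i u"
      unfolding chart_above_def by blast
    have zz: "z - x0 i = (u$1) *\<^sub>R e1 i + (u$2) *\<^sub>R e2 i - t *\<^sub>R \<nu> i" using ut(1) by simp
    have a: "cA i z = u$1" unfolding cA_def zz using o by (simp add: inner_add_left inner_diff_left)
    have b: "cB i z = u$2" unfolding cB_def zz using o by (simp add: inner_add_left inner_diff_left)
    have n: "cN i z = t" unfolding cN_def zz using o by (simp add: inner_add_left inner_diff_left)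
    have "cu i z = u" unfolding cu_def a b by (simp add: vec_eq_iff forall_2)
    thus "\<phi> i (cu i z) < cN i z" using n ut(2) by simp
  next
    assume lt: "\<phi> i (cu i z) < cN i z"
    have "z - x0 i = ((z - x0 i) \<bullet> e1 i) *\<^sub>R e1 i + ((z - x0 i) \<bullet> e2 i) *\<^sub>R e2 i + ((z - x0 i) \<bullet> (- \<nu> i)) *\<^sub>R (- \<nu> i)"
      by (rule orth_span[OF gcs(1)[OF i]])
    hence "z = x0 i + ((cu i z)$1) *\<^sub>R e1 i + ((cu i z)$2) *\<^sub>R e2 i - (cN i z) *\<^sub>R \<nu> i"
      unfolding cu_def cA_def cB_def cN_def by (simp add: algebra_simps)
    thus "z \<in> chart_above (x0 i) (e1 i) (e2 i) (\<nu> i) (\<phi> i)"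
      unfolding chart_above_def using lt by blast
  qed
  finally show ?thesis .
qed

lemma TRANS:
  assumes i: "i \<in> {1..m1}" and bz: "ball z r \<subseteq> \<Omega>"
    and up: "(1/100) * (\<bar>v \<bullet> e1 i\<bar> + \<bar>v \<bullet> e2 i\<bar>) \<le> v \<bullet> (- \<nu> i)"
    and r1: "dist (x0 i) z + r \<le> 3*d" and r2: "dist (x0 i) (z + v) + r \<le> 3*d"
    and t: "0 \<le> \<tau>" "\<tau> \<le> 1"
  shows "ball (z + \<tau> *\<^sub>R v) r \<subseteq> \<Omega>"
proof
  fix q assume q: "q \<in> ball (z + \<tau> *\<^sub>R v) r"
  define w where "w = q - \<tau> *\<^sub>R v"
  have dzw: "dist z w < r" using q by (simp add: w_def dist_norm algebra_simps)
  hence wO: "w \<in> \<Omega>" using bz by auto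
  have "dist (x0 i) w \<le> dist (x0 i) z + dist z w" by (rule dist_triangle)
  hence wb: "w \<in> ball (x0 i) (3*d)" using dzw r1 by simp
  have lt: "\<phi> i (cu i w) < cN i w" using MEM[OF i wb] wO by simp
  have "z + \<tau> *\<^sub>R v - x0 i = (1 - \<tau>) *\<^sub>R (z - x0 i) + \<tau> *\<^sub>R (z + v - x0 i)"
    by (simp add: algebra_simps)
  hence "norm (z + \<tau> *\<^sub>R v - x0 i) \<le> norm ((1 - \<tau>) *\<^sub>R (z - x0 i)) + norm (\<tau> *\<^sub>R (z + v - x0 i))"
    by (metis norm_triangle_ineq)
  also have "\<dots> = (1 - \<tau>) * dist (x0 i) z + \<tau> * dist (x0 i) (z + v)"
    using t by (simp add: dist_norm norm_minus_commute)
  finally have dm: "dist (x0 i) (z + \<tau> *\<^sub>R v) \<le> (1 - \<tau>) * dist (x0 i) z + \<tau> * dist (x0 i) (z + v)"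
    by (simp add: dist_norm norm_minus_commute)
  have "(1 - \<tau>) * (dist (x0 i) z + r) + \<tau> * (dist (x0 i) (z + v) + r) \<le> (1 - \<tau>) * (3*d) + \<tau> * (3*d)"
    using t r1 r2 by (intro add_mono mult_left_mono) auto
  moreover have "dist (x0 i) q \<le> dist (x0 i) (z + \<tau> *\<^sub>R v) + dist (z + \<tau> *\<^sub>R v) q" by (rule dist_triangle)
  ultimately have "dist (x0 i) q < 3*d" using dm q by (simp add: algebra_simps)
  hence qb: "q \<in> ball (x0 i) (3*d)" by simp
  have qw: "q = w + \<tau> *\<^sub>R v" by (simp add: w_def)
  have ca: "cA i q = cA i w + \<tau> * (v \<bullet> e1 i)" unfolding cA_def qw by (simp add: algebra_simps inner_add_left)
  have cb: "cB i q = cB i w + \<tau> * (v \<bullet> e2 i)" unfolding cB_def qw by (simp add: algebra_simps inner_add_left)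
  have cn: "cN i q = cN i w + \<tau> * (v \<bullet> (- \<nu> i))" unfolding cN_def qw by (simp add: algebra_simps inner_add_left)
  have "\<bar>\<phi> i (cu i q) - \<phi> i (cu i w)\<bar> \<le> (1/100) * (\<bar>(cu i q)$1 - (cu i w)$1\<bar> + \<bar>(cu i q)$2 - (cu i w)$2\<bar>)"
    by (rule lip[OF gcs(2)[OF i] gcs(4)[OF i]])
  also have "\<dots> = \<tau> * ((1/100) * (\<bar>v \<bullet> e1 i\<bar> + \<bar>v \<bullet> e2 i\<bar>))"
    using t by (simp add: cu_def ca cb abs_mult algebra_simps)
  also have "\<dots> \<le> \<tau> * (v \<bullet> (- \<nu> i))" by (rule mult_left_mono[OF up t(1)])
  finally have "\<phi> i (cu i q) < cN i q" using lt cn by linarith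
  thus "q \<in> \<Omega>" using MEM[OF i qb] by simp
qed

lemma TRANS_seg:
  assumes i: "i \<in> {1..m1}" and bz: "ball z r \<subseteq> \<Omega>"
    and up: "(1/100) * (\<bar>v \<bullet> e1 i\<bar> + \<bar>v \<bullet> e2 i\<bar>) \<le> v \<bullet> (- \<nu> i)"
    and r1: "dist (x0 i) z + r \<le> 3*d" and r2: "dist (x0 i) (z + v) + r \<le> 3*d"
    and p: "p \<in> closed_segment z (z + v)"
  shows "ball p r \<subseteq> \<Omega>"
proof -
  obtain u where u: "0 \<le> u" "u \<le> 1" "p = (1 - u) *\<^sub>R z + u *\<^sub>R (z + v)"
    using p by (auto simp: closed_segment_def)
  have "p = z + u *\<^sub>R v" using u(3) by (simp add: algebra_simps)
  thus ?thesis using TRANS[OF i bz up r1 r2 u(1,2)] by simp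
qed

end


context zz begin

definition "E a b \<longleftrightarrow> a \<in> Y \<and> b \<in> Y \<and> dist a b < d/8"
abbreviation "R \<equiv> E\<^sup>*\<^sup>*"

lemma R_sym: "R a b \<Longrightarrow> R b a"
proof (induction rule: rtranclp_induct)
  case base thus ?case by simp
next
  case (step b c)
  have "E c b" using step(2) unfolding E_def by (auto simp: dist_commute)
  thus ?case using step(3) by (rule converse_rtranclp_into_rtranclp)
qed

lemma SEG: "connected S \<Longrightarrow> x \<in> S \<Longrightarrow> x \<in> \<Omega> \<Longrightarrow> (\<And>p. p \<in> S \<Longrightarrow> p \<notin> F) \<Longrightarrow> S \<subseteq> \<Omega>"
  using connected_Int_frontier[of S \<Omega>] by blast

lemma balls_setdist: "S \<noteq> {} \<Longrightarrow> (\<And>p. p \<in> S \<Longrightarrow> ball p r \<subseteq> \<Omega>) \<Longrightarrow> r \<le> setdist S F"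
  by (rule le_setdistI) (use Fne ball_dist in auto)

lemma TB_edge:
  assumes a: "a \<in> K" and b: "b \<in> K" and ab: "dist a b < d/8"
  shows "closed_segment a b \<subseteq> \<Omega>" "d/10 < setdist (closed_segment a b) F"
proof -
  define r0 where "r0 = sqrt ((d/8)\<^sup>2 - (dist a b)\<^sup>2 / 4)"
  have "(dist a b)\<^sup>2 < (d/8)\<^sup>2" using ab by (simp add: power_strict_mono)
  moreover have "(d/10)\<^sup>2 = d\<^sup>2/100" "(d/8)\<^sup>2 = d\<^sup>2/64" by (simp_all add: power_divide)
  moreover have "0 < d\<^sup>2" using dpos by simp
  ultimately have "(d/10)\<^sup>2 < (d/8)\<^sup>2 - (dist a b)\<^sup>2 / 4" by linarith
  hence "sqrt ((d/10)\<^sup>2) < r0" unfolding r0_def by (rule real_sqrt_less_mono)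
  hence r0g: "d/10 < r0" using dpos by simp
  have key: "r0 \<le> dist q p" if q: "q \<in> F" and p: "p \<in> closed_segment a b" for p q
  proof -
    have "d/8 \<le> dist a q" by (rule ball_dist[OF K_ball[OF a] q])
    moreover have "d/8 \<le> dist b q" by (rule ball_dist[OF K_ball[OF b] q])
    ultimately have "(d/8)\<^sup>2 - (dist a b)\<^sup>2 / 4 \<le> (dist q p)\<^sup>2"
      using two_ball[of "d/8" q a b p] p dpos by (simp add: dist_commute)
    hence "r0 \<le> sqrt ((dist q p)\<^sup>2)" unfolding r0_def by (rule real_sqrt_le_mono)
    thus ?thesis by simp
  qed
  show "d/10 < setdist (closed_segment a b) F"
  proof -
    have "r0 \<le> setdist (closed_segment a b) F"
    proof (rule le_setdistI)
      show "closed_segment a b \<noteq> {}" by simp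
      show "F \<noteq> {}" by (rule Fne)
      fix x y assume "x \<in> closed_segment a b" "y \<in> F"
      thus "r0 \<le> dist x y" using key[of y x] by (simp add: dist_commute)
    qed
    thus ?thesis using r0g by simp
  qed
  show "closed_segment a b \<subseteq> \<Omega>"
  proof (rule SEG)
    show "connected (closed_segment a b)" by simp
    show "a \<in> closed_segment a b" by simp
    show "a \<in> \<Omega>" using a unfolding K_def by simp
    fix p assume "p \<in> closed_segment a b"
    thus "p \<notin> F" using key[of p p] r0g dpos by force
  qed
qed

lemma yy_Y: "i \<in> {1..m1} \<Longrightarrow> yy i \<in> Y"
  unfolding Yset_def yy_def by auto

lemma C_Y: "C \<subseteq> Y"
  unfolding Yset_def by auto

lemma Y_ball: "y \<in> Y \<Longrightarrow> ball y (d/8) \<subseteq> \<Omega>"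
  using Y_K K_ball by blast

lemma yy_coords:
  assumes i: "i \<in> {1..m1}"
  shows "(yy i - x0 i) \<bullet> e1 i = 0" "(yy i - x0 i) \<bullet> e2 i = 0" "(yy i - x0 i) \<bullet> (- \<nu> i) = 3*d/4"
    "dist (x0 i) (yy i) = 3*d/4"
  using orth[OF i] dpos by (auto simp: yy_def dist_norm)

lemma CONN:
  assumes S: "S \<subseteq> K" "connected S" and y: "y \<in> Y" "s \<in> S" "dist y s < d/16"
    and y': "y' \<in> Y" "s' \<in> S" "dist y' s' < d/16"
  shows "R y y'"
proof -
  define A where "A = {a\<in>Y. R y a}"
  define U1 where "U1 = (\<Union>a\<in>A. ball a (d/16))"
  define U2 where "U2 = (\<Union>a\<in>Y-A. ball a (d/16))"
  have o: "open U1" "open U2" unfolding U1_def U2_def by auto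
  have cov: "S \<subseteq> U1 \<union> U2"
  proof
    fix x assume "x \<in> S"
    hence "x \<in> K" using S by auto
    then obtain c where "c \<in> C" "x \<in> ball c (d/16)" using K_cov by auto
    thus "x \<in> U1 \<union> U2" using C_Y unfolding U1_def U2_def by blast
  qed
  have disj: "U1 \<inter> U2 \<inter> S = {}"
  proof (rule ccontr)
    assume "U1 \<inter> U2 \<inter> S \<noteq> {}"
    then obtain x a b where ab: "a \<in> A" "b \<in> Y - A" "x \<in> ball a (d/16)" "x \<in> ball b (d/16)"
      unfolding U1_def U2_def by blast
    have "dist a b \<le> dist a x + dist x b" by (rule dist_triangle)
    hence "dist a b < d/8" using ab(3,4) by (simp add: dist_commute)
    hence "E a b" using ab(1,2) unfolding E_def A_def by auto
    hence "R y b" using ab(1) unfolding A_def by auto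
    thus False using ab(2) unfolding A_def by auto
  qed
  have "y \<in> A" using y(1) unfolding A_def by auto
  hence "s \<in> U1" using y(3) unfolding U1_def by auto
  hence "U1 \<inter> S \<noteq> {}" using y(2) by auto
  hence "U2 \<inter> S = {}" using connectedD[OF S(2) o disj cov] by blast
  hence "s' \<in> U1" using cov y'(2) by auto
  then obtain a where a: "a \<in> A" "dist a s' < d/16" unfolding U1_def by auto
  have "dist a y' \<le> dist a s' + dist s' y'" by (rule dist_triangle)
  hence "E a y'" using a y' A_def unfolding E_def by (auto simp: dist_commute)
  thus "R y y'" using a(1) unfolding A_def by auto
qed

lemma caseB:
  assumes a: "a \<in> Y" and i: "i \<in> {1..m1}" and z: "dist a z < d/16" "dist (x0 i) z < d/4"
  shows "R a (yy i)"
proof -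
  have da: "dist (x0 i) a < 5*d/16" using z dist_triangle[of "x0 i" a z] by (simp add: dist_commute)
  define v where "v = yy i - a"
  have ve: "v \<bullet> e1 i = - cA i a" "v \<bullet> e2 i = - cB i a" "v \<bullet> (- \<nu> i) = 3*d/4 - cN i a"
  proof -
    have vv: "v = (yy i - x0 i) - (a - x0 i)" by (simp add: v_def)
    show "v \<bullet> e1 i = - cA i a" "v \<bullet> e2 i = - cB i a" "v \<bullet> (- \<nu> i) = 3*d/4 - cN i a"
    proof -
      have "v \<bullet> e1 i = (yy i - x0 i) \<bullet> e1 i - (a - x0 i) \<bullet> e1 i"
           "v \<bullet> e2 i = (yy i - x0 i) \<bullet> e2 i - (a - x0 i) \<bullet> e2 i"
           "v \<bullet> (- \<nu> i) = (yy i - x0 i) \<bullet> (- \<nu> i) - (a - x0 i) \<bullet> (- \<nu> i)"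
        by (subst vv, rule inner_diff_left)+
      thus "v \<bullet> e1 i = - cA i a" "v \<bullet> e2 i = - cB i a" "v \<bullet> (- \<nu> i) = 3*d/4 - cN i a"
        unfolding cA_def cB_def cN_def using yy_coords(1-3)[OF i] by linarith+
    qed
  qed
  have b: "\<bar>cA i a\<bar> < 5*d/16" "\<bar>cB i a\<bar> < 5*d/16" "\<bar>cN i a\<bar> < 5*d/16"
    using coord_bound[OF i, of a] da by linarith+
  have up: "(1/100) * (\<bar>v \<bullet> e1 i\<bar> + \<bar>v \<bullet> e2 i\<bar>) \<le> v \<bullet> (- \<nu> i)"
    unfolding ve using b dpos by simp
  have r1: "dist (x0 i) a + d/8 \<le> 3*d" using da dpos by simp
  have r2: "dist (x0 i) (a + v) + d/8 \<le> 3*d" using yy_coords(4)[OF i] dpos by (simp add: v_def)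
  have segK: "closed_segment a (yy i) \<subseteq> K"
  proof
    fix p assume "p \<in> closed_segment a (yy i)"
    hence "p \<in> closed_segment a (a + v)" by (simp add: v_def)
    hence "ball p (d/8) \<subseteq> \<Omega>" by (rule TRANS_seg[OF i Y_ball[OF a] up r1 r2])
    thus "p \<in> K" by (rule ball_K') simp
  qed
  show ?thesis
    by (rule CONN[OF segK _ a _ _ yy_Y[OF i], of a "yy i"]) (use dpos in auto)
qed

end


context zz begin

lemma caseC:
  assumes i: "i \<in> {1..m1}" and j: "j \<in> {1..m1}"
    and z: "dist (x0 i) z < d/4" "dist (x0 j) z < d/4"
  shows "R (yy i) (yy j)"
proof -
  have dij: "dist (x0 i) (x0 j) < d/2" using z dist_triangle[of "x0 i" "x0 j" z] by (simp add: dist_commute)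
  have dj: "dist (x0 i) (yy j) < 5*d/4"
    using dij yy_coords(4)[OF j] dist_triangle[of "x0 i" "yy j" "x0 j"] by simp
  have bj: "ball (yy j) (d/8) \<subseteq> \<Omega>" by (rule Y_ball[OF yy_Y[OF j]])
  have bi: "ball (yy i) (d/8) \<subseteq> \<Omega>" by (rule Y_ball[OF yy_Y[OF i]])
  define pj where "pj = yy j + d *\<^sub>R (- \<nu> i)"
  note o = orth[OF i]
  have seg1: "closed_segment (yy j) pj \<subseteq> K"
  proof
    fix p assume p: "p \<in> closed_segment (yy j) pj"
    have up: "(1/100) * (\<bar>(d *\<^sub>R (- \<nu> i)) \<bullet> e1 i\<bar> + \<bar>(d *\<^sub>R (- \<nu> i)) \<bullet> e2 i\<bar>) \<le> (d *\<^sub>R (- \<nu> i)) \<bullet> (- \<nu> i)"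
      using o dpos by simp
    have r1: "dist (x0 i) (yy j) + d/8 \<le> 3*d" using dj dpos by simp
    have "dist (x0 i) (yy j + d *\<^sub>R (- \<nu> i)) \<le> dist (x0 i) (yy j) + dist (yy j) (yy j + d *\<^sub>R (- \<nu> i))"
      by (rule dist_triangle)
    also have "dist (yy j) (yy j + d *\<^sub>R (- \<nu> i)) = d" using o dpos by (simp add: dist_norm)
    finally have r2: "dist (x0 i) (yy j + d *\<^sub>R (- \<nu> i)) + d/8 \<le> 3*d" using dj dpos by simp
    have "ball p (d/8) \<subseteq> \<Omega>" by (rule TRANS_seg[OF i bj up r1 r2]) (use p pj_def in simp)
    thus "p \<in> K" by (rule ball_K') simp
  qed
  have yjO: "yy j \<in> \<Omega>" using bj dpos by (meson centre_in_ball subsetD zero_less_divide_iff zero_less_numeral)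
  have yjb: "yy j \<in> ball (x0 i) (3*d)" using dj dpos by simp
  have lt: "\<phi> i (cu i (yy j)) < cN i (yy j)" using MEM[OF i yjb] yjO by simp
  have "\<bar>\<phi> i (cu i (yy j)) - \<phi> i 0\<bar> \<le> (1/100) * (\<bar>(cu i (yy j))$1 - (0::real^2)$1\<bar> + \<bar>(cu i (yy j))$2 - (0::real^2)$2\<bar>)"
    by (rule lip[OF gcs(2)[OF i] gcs(4)[OF i]])
  note lp0 = this
  have lp: "- ((1/100) * (\<bar>cA i (yy j)\<bar> + \<bar>cB i (yy j)\<bar>)) \<le> \<phi> i (cu i (yy j))"
  proof -
    have "\<bar>\<phi> i (cu i (yy j))\<bar> \<le> (1/100) * (\<bar>cA i (yy j)\<bar> + \<bar>cB i (yy j)\<bar>)"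
      using lp0 gcs(3)[OF i] by (simp add: cu_def)
    thus ?thesis by linarith
  qed
  have cb: "\<bar>cA i (yy j)\<bar> < 5*d/4" "\<bar>cB i (yy j)\<bar> < 5*d/4"
    using coord_bound[OF i, of "yy j"] dj by linarith+
  define v where "v = pj - yy i"
  have vv: "v = (pj - x0 i) - (yy i - x0 i)" by (simp add: v_def)
  have pjx: "pj - x0 i = (yy j - x0 i) + d *\<^sub>R (- \<nu> i)" by (simp add: pj_def)
  have ve: "v \<bullet> e1 i = cA i (yy j)" "v \<bullet> e2 i = cB i (yy j)" "v \<bullet> (- \<nu> i) = cN i (yy j) + d - 3*d/4"
  proof -
    have "v \<bullet> e1 i = (pj - x0 i) \<bullet> e1 i - (yy i - x0 i) \<bullet> e1 i"
         "v \<bullet> e2 i = (pj - x0 i) \<bullet> e2 i - (yy i - x0 i) \<bullet> e2 i"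
         "v \<bullet> (- \<nu> i) = (pj - x0 i) \<bullet> (- \<nu> i) - (yy i - x0 i) \<bullet> (- \<nu> i)"
      by (subst vv, rule inner_diff_left)+
    moreover have "(pj - x0 i) \<bullet> e1 i = cA i (yy j)" "(pj - x0 i) \<bullet> e2 i = cB i (yy j)"
        "(pj - x0 i) \<bullet> (- \<nu> i) = cN i (yy j) + d"
      unfolding pjx cA_def cB_def cN_def inner_add_left using o by simp_all
    ultimately show "v \<bullet> e1 i = cA i (yy j)" "v \<bullet> e2 i = cB i (yy j)" "v \<bullet> (- \<nu> i) = cN i (yy j) + d - 3*d/4"
      using yy_coords(1-3)[OF i] by linarith+
  qed
  have seg2: "closed_segment (yy i) pj \<subseteq> K"
  proof
    fix p assume p: "p \<in> closed_segment (yy i) pj"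
    have up: "(1/100) * (\<bar>v \<bullet> e1 i\<bar> + \<bar>v \<bullet> e2 i\<bar>) \<le> v \<bullet> (- \<nu> i)"
    proof -
      have "(1/100) * (\<bar>cA i (yy j)\<bar> + \<bar>cB i (yy j)\<bar>) \<le> d/40" using cb by simp
      thus ?thesis unfolding ve using lt lp dpos by linarith
    qed
    have r1: "dist (x0 i) (yy i) + d/8 \<le> 3*d" using yy_coords(4)[OF i] dpos by simp
    have "dist (x0 i) pj \<le> dist (x0 i) (yy j) + dist (yy j) pj" by (rule dist_triangle)
    also have "dist (yy j) pj = d" using o dpos by (simp add: dist_norm pj_def)
    finally have r2: "dist (x0 i) (yy i + v) + d/8 \<le> 3*d" using dj dpos by (simp add: v_def)
    have "ball p (d/8) \<subseteq> \<Omega>" by (rule TRANS_seg[OF i bi up r1 r2]) (use p v_def in simp)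
    thus "p \<in> K" by (rule ball_K') simp
  qed
  have SK: "closed_segment (yy i) pj \<union> closed_segment (yy j) pj \<subseteq> K" using seg1 seg2 by blast
  have Sc: "connected (closed_segment (yy i) pj \<union> closed_segment (yy j) pj)"
    by (rule connected_Un) auto
  show ?thesis
    by (rule CONN[OF SK Sc yy_Y[OF i] _ _ yy_Y[OF j], of "yy i" "yy j"]) (use dpos in auto)
qed

definition "W a = ball a (d/16) \<union> (\<Union>i\<in>{i\<in>{1..m1}. a = yy i}. ball (x0 i) (d/4))"

lemma W_open: "open (W a)" unfolding W_def by auto

lemma W_self: "a \<in> W a" unfolding W_def using dpos by auto

lemma cover: "z \<in> \<Omega> \<Longrightarrow> \<exists>b\<in>Y. z \<in> W b"
proof -
  assume zO: "z \<in> \<Omega>"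
  show ?thesis
  proof (cases "d/8 \<le> infdist z F")
    case True
    hence "z \<in> K" using zO unfolding K_def by simp
    then obtain c where "c \<in> C" "z \<in> ball c (d/16)" using K_cov by auto
    thus ?thesis using C_Y unfolding W_def by blast
  next
    case False
    then obtain q where q: "q \<in> F" "dist z q < d/8" using infdist_lt by (meson not_le)
    then obtain i where i: "i \<in> {1..m1}" "q \<in> ball (x0 i) (d/8)" using F_cov by blast
    have "dist (x0 i) z \<le> dist (x0 i) q + dist q z" by (rule dist_triangle)
    hence "dist (x0 i) z < d/4" using i(2) q(2) by (simp add: dist_commute)
    hence "z \<in> W (yy i)" unfolding W_def using i(1) by auto
    thus ?thesis using yy_Y[OF i(1)] by blast
  qed
qed

lemma overlap:
  assumes a: "a \<in> Y" and b: "b \<in> Y" and za: "z \<in> W a" and zb: "z \<in> W b"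
  shows "R a b"
proof -
  have A: "dist a z < d/16 \<or> (\<exists>i\<in>{1..m1}. a = yy i \<and> dist (x0 i) z < d/4)"
    using za unfolding W_def by auto
  have B: "dist b z < d/16 \<or> (\<exists>j\<in>{1..m1}. b = yy j \<and> dist (x0 j) z < d/4)"
    using zb unfolding W_def by auto
  show ?thesis
  proof (cases "dist a z < d/16")
    case ta: True
    show ?thesis
    proof (cases "dist b z < d/16")
      case True
      have "dist a b \<le> dist a z + dist z b" by (rule dist_triangle)
      hence "E a b" using ta True a b unfolding E_def by (simp add: dist_commute)
      thus ?thesis by simp
    next
      case False
      then obtain j where j: "j \<in> {1..m1}" "b = yy j" "dist (x0 j) z < d/4" using B by blast
      show ?thesis using caseB[OF a j(1) ta j(3)] j(2) by simp
    qed
  next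
    case fa: False
    then obtain i where i: "i \<in> {1..m1}" "a = yy i" "dist (x0 i) z < d/4" using A by blast
    show ?thesis
    proof (cases "dist b z < d/16")
      case True
      show ?thesis using R_sym[OF caseB[OF b i(1) True i(3)]] i(2) by simp
    next
      case False
      then obtain j where j: "j \<in> {1..m1}" "b = yy j" "dist (x0 j) z < d/4" using B by blast
      show ?thesis using caseC[OF i(1) j(1) i(3) j(3)] i(2) j(2) by simp
    qed
  qed
qed

lemma MAIN_CONN:
  assumes y: "y \<in> Y" and y': "y' \<in> Y"
  shows "R y y'"
proof -
  define A where "A = {a\<in>Y. R y a}"
  define U1 where "U1 = (\<Union>a\<in>A. W a)"
  define U2 where "U2 = (\<Union>a\<in>Y-A. W a)"
  have o: "open U1" "open U2" unfolding U1_def U2_def using W_open by auto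
  have cov: "\<Omega> \<subseteq> U1 \<union> U2"
  proof
    fix x assume "x \<in> \<Omega>"
    then obtain b where "b \<in> Y" "x \<in> W b" using cover by blast
    thus "x \<in> U1 \<union> U2" unfolding U1_def U2_def by blast
  qed
  have disj: "U1 \<inter> U2 \<inter> \<Omega> = {}"
  proof (rule ccontr)
    assume "U1 \<inter> U2 \<inter> \<Omega> \<noteq> {}"
    then obtain x a b where ab: "a \<in> A" "b \<in> Y - A" "x \<in> W a" "x \<in> W b"
      unfolding U1_def U2_def by blast
    have "R a b" by (rule overlap) (use ab A_def in auto)
    hence "R y b" using ab(1) unfolding A_def by auto
    thus False using ab(2) unfolding A_def by auto
  qed
  have yO: "y \<in> \<Omega>" using y Y_K unfolding K_def by auto
  have "y \<in> A" using y unfolding A_def by auto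
  hence "y \<in> U1" using W_self unfolding U1_def by auto
  hence "U1 \<inter> \<Omega> \<noteq> {}" using yO by auto
  hence U2e: "U2 \<inter> \<Omega> = {}" using connectedD[OF cnn o disj cov] by blast
  show ?thesis
  proof (rule ccontr)
    assume "\<not> R y y'"
    hence "y' \<in> Y - A" using y' unfolding A_def by auto
    hence "y' \<in> U2" using W_self unfolding U2_def by auto
    moreover have "y' \<in> \<Omega>" using y' Y_K unfolding K_def by auto
    ultimately show False using U2e by auto
  qed
qed

end


context zz begin

lemma START:
  assumes xO: "x \<in> \<Omega>"
  shows "\<exists>y\<in>Y. closed_segment x y \<subseteq> \<Omega> \<and> min (infdist x F) (d/10) \<le> setdist (closed_segment x y) F"
proof (cases "d/8 \<le> infdist x F")
  case True
  hence xK: "x \<in> K" using xO unfolding K_def by simp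
  then obtain c where c: "c \<in> C" "x \<in> ball c (d/16)" using K_cov by auto
  have cK: "c \<in> K" using c(1) C_K by auto
  have "dist x c < d/8" using c(2) dpos by (simp add: dist_commute)
  note tb = TB_edge[OF xK cK this]
  show ?thesis using tb c(1) C_Y by (intro bexI[of _ c]) auto
next
  case False
  then obtain q where q: "q \<in> F" "dist x q < d/8" using infdist_lt by (meson not_le)
  then obtain i where i: "i \<in> {1..m1}" "q \<in> ball (x0 i) (d/8)" using F_cov by blast
  have "dist (x0 i) x \<le> dist (x0 i) q + dist q x" by (rule dist_triangle)
  hence dx: "dist (x0 i) x < d/4" using i(2) q(2) by (simp add: dist_commute)
  define r where "r = infdist x F"
  have r0: "0 < r" unfolding r_def by (rule infdist_pos[OF xO])
  have rl: "r < d/8" using False r_def by simp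
  have bx: "ball x r \<subseteq> \<Omega>" unfolding r_def by (rule infdist_ball[OF xO])
  define v where "v = yy i - x"
  have vv: "v = (yy i - x0 i) - (x - x0 i)" by (simp add: v_def)
  have ve: "v \<bullet> e1 i = - cA i x" "v \<bullet> e2 i = - cB i x" "v \<bullet> (- \<nu> i) = 3*d/4 - cN i x"
  proof -
    have "v \<bullet> e1 i = (yy i - x0 i) \<bullet> e1 i - (x - x0 i) \<bullet> e1 i"
         "v \<bullet> e2 i = (yy i - x0 i) \<bullet> e2 i - (x - x0 i) \<bullet> e2 i"
         "v \<bullet> (- \<nu> i) = (yy i - x0 i) \<bullet> (- \<nu> i) - (x - x0 i) \<bullet> (- \<nu> i)"
      by (subst vv, rule inner_diff_left)+
    thus "v \<bullet> e1 i = - cA i x" "v \<bullet> e2 i = - cB i x" "v \<bullet> (- \<nu> i) = 3*d/4 - cN i x"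
      unfolding cA_def cB_def cN_def using yy_coords(1-3)[OF i(1)] by linarith+
  qed
  have b: "\<bar>cA i x\<bar> < d/4" "\<bar>cB i x\<bar> < d/4" "\<bar>cN i x\<bar> < d/4"
    using coord_bound[OF i(1), of x] dx by linarith+
  have up: "(1/100) * (\<bar>v \<bullet> e1 i\<bar> + \<bar>v \<bullet> e2 i\<bar>) \<le> v \<bullet> (- \<nu> i)"
  proof -
    have "(1/100) * (\<bar>cA i x\<bar> + \<bar>cB i x\<bar>) \<le> d/200" using b by simp
    thus ?thesis unfolding ve using b dpos by simp
  qed
  have r1: "dist (x0 i) x + r \<le> 3*d" using dx rl dpos by simp
  have r2: "dist (x0 i) (x + v) + r \<le> 3*d" using yy_coords(4)[OF i(1)] rl dpos by (simp add: v_def)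
  have bp: "ball p r \<subseteq> \<Omega>" if p: "p \<in> closed_segment x (yy i)" for p
    by (rule TRANS_seg[OF i(1) bx up r1 r2]) (use p v_def in simp)
  have "r \<le> setdist (closed_segment x (yy i)) F"
    by (rule balls_setdist) (use bp in auto)
  moreover have "closed_segment x (yy i) \<subseteq> \<Omega>"
  proof
    fix p assume "p \<in> closed_segment x (yy i)"
    thus "p \<in> \<Omega>" using bp[of p] r0 by auto
  qed
  ultimately show ?thesis using yy_Y[OF i(1)] r_def by (intro bexI[of _ "yy i"]) auto
qed

lemma R_list:
  assumes "R y y'" "y \<in> Y"
  shows "\<exists>ys. ys \<noteq> [] \<and> hd ys = y \<and> last ys = y' \<and> set ys \<subseteq> Y \<and>
     (\<forall>i. i + 1 < length ys \<longrightarrow> E (ys ! i) (ys ! (i+1)))"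
  using assms(1)
proof (induction rule: rtranclp_induct)
  case base
  show ?case using assms(2) by (intro exI[of _ "[y]"]) auto
next
  case (step b c)
  then obtain ys where ys: "ys \<noteq> []" "hd ys = y" "last ys = b" "set ys \<subseteq> Y"
    "\<forall>i. i + 1 < length ys \<longrightarrow> E (ys ! i) (ys ! (i+1))" by blast
  have cY: "c \<in> Y" using step(2) unfolding E_def by simp
  have ch: "E ((ys @ [c]) ! i) ((ys @ [c]) ! (i+1))" if i: "i + 1 < length (ys @ [c])" for i
  proof (cases "i + 1 < length ys")
    case True
    thus ?thesis using ys(5) by (simp add: nth_append)
  next
    case False
    hence "i + 1 = length ys" using i by simp
    hence ii: "i = length ys - 1" by simp
    have "ys ! i = b" unfolding ii using ys(1,3) by (simp add: last_conv_nth)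
    moreover have "(ys @ [c]) ! i = ys ! i" using \<open>i + 1 = length ys\<close> by (simp add: nth_append)
    moreover have "(ys @ [c]) ! (i+1) = c" using \<open>i + 1 = length ys\<close> by (simp add: nth_append)
    ultimately show ?thesis using step(2) by simp
  qed
  show ?case
    using ys cY ch by (intro exI[of _ "ys @ [c]"]) auto
qed

lemma main:
  assumes x1: "x1 \<in> \<Omega>" and x2: "x2 \<in> \<Omega>"
  shows "\<exists>ys :: (real^3) list.
        length ys \<ge> 1 \<and> set ys \<subseteq> Yset d m1 x0 \<nu> C \<and>
        closed_segment x1 (hd ys) \<subseteq> \<Omega> \<and>
        closed_segment (last ys) x2 \<subseteq> \<Omega> \<and>
        (\<forall>i. i + 1 < length ys \<longrightarrow> closed_segment (ys ! i) (ys ! (i+1)) \<subseteq> \<Omega>) \<and>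
        setdist (closed_segment x1 (hd ys)) (frontier \<Omega>) \<ge> min (infdist x1 (frontier \<Omega>)) (d/10) \<and>
        setdist (closed_segment x2 (last ys)) (frontier \<Omega>) \<ge> min (infdist x2 (frontier \<Omega>)) (d/10) \<and>
        (\<forall>i. i + 1 < length ys \<longrightarrow> setdist (closed_segment (ys ! i) (ys ! (i+1))) (frontier \<Omega>) > d/10)"
proof -
  obtain y1 where y1: "y1 \<in> Y" "closed_segment x1 y1 \<subseteq> \<Omega>"
    "min (infdist x1 F) (d/10) \<le> setdist (closed_segment x1 y1) F" using START[OF x1] by blast
  obtain y2 where y2: "y2 \<in> Y" "closed_segment x2 y2 \<subseteq> \<Omega>"
    "min (infdist x2 F) (d/10) \<le> setdist (closed_segment x2 y2) F" using START[OF x2] by blast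
  obtain ys where ys: "ys \<noteq> []" "hd ys = y1" "last ys = y2" "set ys \<subseteq> Y"
     "\<forall>i. i + 1 < length ys \<longrightarrow> E (ys ! i) (ys ! (i+1))"
    using R_list[OF MAIN_CONN[OF y1(1) y2(1)] y1(1)] by blast
  have edge: "closed_segment (ys ! i) (ys ! (i+1)) \<subseteq> \<Omega> \<and> d/10 < setdist (closed_segment (ys ! i) (ys ! (i+1))) F"
    if "i + 1 < length ys" for i
  proof -
    have e: "E (ys ! i) (ys ! (i+1))" using ys(5) that by blast
    hence "ys ! i \<in> K" "ys ! (i+1) \<in> K" "dist (ys ! i) (ys ! (i+1)) < d/8"
      using Y_K unfolding E_def by auto
    thus ?thesis using TB_edge by blast
  qed
  have "length ys \<ge> 1" using ys(1) by (simp add: Suc_le_eq)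
  moreover have "closed_segment (last ys) x2 \<subseteq> \<Omega>" using y2(2) ys(3) by (simp add: closed_segment_commute)
  ultimately show ?thesis apply (intro exI[of _ ys]) using ys y1 y2 edge by auto
qed

end

theorem lemma2p6:
  fixes \<Omega> :: "(real^3) set"
  assumes "open \<Omega>" and "bounded \<Omega>" and "connected \<Omega>" and "\<Omega> \<noteq> {}"
    and "C2_boundary \<Omega>"
  shows "\<exists>\<delta>>0. \<forall>d m1 x0 e1 e2 \<nu> \<phi> g C x1 x2.
     0 < d \<and> d < min 1 \<delta> \<and> good_charts \<Omega> d m1 x0 e1 e2 \<nu> \<phi> g \<and>
     min_subcover_centres \<Omega> d C \<and> x1 \<in> \<Omega> \<and> x2 \<in> \<Omega> \<longrightarrow>
     (\<exists>ys :: (real^3) list.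
        length ys \<ge> 1 \<and> set ys \<subseteq> Yset d m1 x0 \<nu> C \<and>
        closed_segment x1 (hd ys) \<subseteq> \<Omega> \<and>
        closed_segment (last ys) x2 \<subseteq> \<Omega> \<and>
        (\<forall>i. i + 1 < length ys \<longrightarrow> closed_segment (ys ! i) (ys ! (i+1)) \<subseteq> \<Omega>) \<and>
        setdist (closed_segment x1 (hd ys)) (frontier \<Omega>) \<ge> min (infdist x1 (frontier \<Omega>)) (d/10) \<and>
        setdist (closed_segment x2 (last ys)) (frontier \<Omega>) \<ge> min (infdist x2 (frontier \<Omega>)) (d/10) \<and>
        (\<forall>i. i + 1 < length ys \<longrightarrow> setdist (closed_segment (ys ! i) (ys ! (i+1))) (frontier \<Omega>) > d/10))"
proof (intro exI[of _ 1] conjI allI impI)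
  show "(0::real) < 1" by simp
  fix d m1 x0 e1 e2 \<nu> \<phi> g C x1 x2
  assume h: "0 < d \<and> d < min 1 1 \<and> good_charts \<Omega> d m1 x0 e1 e2 \<nu> \<phi> g \<and>
     min_subcover_centres \<Omega> d C \<and> x1 \<in> \<Omega> \<and> x2 \<in> \<Omega>"
  interpret zz \<Omega> d m1 x0 e1 e2 \<nu> \<phi> g C
    using assms h by unfold_locales auto
  show "\<exists>ys :: (real^3) list.
        length ys \<ge> 1 \<and> set ys \<subseteq> Yset d m1 x0 \<nu> C \<and>
        closed_segment x1 (hd ys) \<subseteq> \<Omega> \<and>
        closed_segment (last ys) x2 \<subseteq> \<Omega> \<and>
        (\<forall>i. i + 1 < length ys \<longrightarrow> closed_segment (ys ! i) (ys ! (i+1)) \<subseteq> \<Omega>) \<and>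
        setdist (closed_segment x1 (hd ys)) (frontier \<Omega>) \<ge> min (infdist x1 (frontier \<Omega>)) (d/10) \<and>
        setdist (closed_segment x2 (last ys)) (frontier \<Omega>) \<ge> min (infdist x2 (frontier \<Omega>)) (d/10) \<and>
        (\<forall>i. i + 1 < length ys \<longrightarrow> setdist (closed_segment (ys ! i) (ys ! (i+1))) (frontier \<Omega>) > d/10)"
    using main h by blast
qed


end
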